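(* In the risk-aversion-shock setting, fix $i\in\{1,\dots,N\}$ with $\bar p_{ii}=1$ and $r(G_i)<1$, and let $x_i^*\in[1,\infty)^M$ be the unique fixed point of $F_i$. If $c\in\mathcal C$ satisfies $c(w,z_{ij})/w\ge x_i^*(\tilde z_j)^{-1/\gamma_i}$ for all $w>0$ and all $j\in\{1,\dots,M\}$, then $Tc(w,z_{ij})/w\ge x_i^*(\tilde z_j)^{-1/\gamma_i}$ for all $w>0$ and all $j\in\{1,\dots,M\}$.
   Context: Risk-aversion-shock setting. $\mathsf Z=\bar{\mathsf Z}\times\tilde{\mathsf Z}$ with $\bar{\mathsf Z}=\{\bar z_1,\dots,\bar z_N\}$, $\tilde{\mathsf Z}=\{\tilde z_1,\dots,\tilde z_M\}$; $Z_t=(\bar Z_t,\tilde Z_t)$ where $\{\bar Z_t\}$, $\{\tilde Z_t\}$ are independent Markov chains with transition matrices $\bar P=(\bar p_{ij})$ and $\tilde P=(\tilde p_{jk})$, so $\{Z_t\}$ has transition matrix $P=\bar P\otimes\tilde P$. Write $z_{ij}=(\bar z_i,\tilde z_j)$. $\{\epsilon_t\}_{t\ge1}$ i.i.d. with distribution $\pi$, independent of $\{Z_t\}$; for nonnegative measurable $\beta,R,Y$, $\beta_t=\beta(Z_{t-1},Z_t,\epsilon_t)$, $R_t=R(Z_{t-1},Z_t,\epsilon_t)$, $Y_t=Y(Z_{t-1},Z_t,\epsilon_t)$. Utility: $u(c,z_{ij})=c^{1-\gamma_i}/(1-\gamma_i)$ if $\gamma_i\ne1$ and $\log c$ if $\gamma_i=1$,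 where $0<\gamma_1<\dots<\gamma_N$; $u'(c,z)$ is the derivative in $c$. $\mathbb E_z$: expectation given $Z_0=z$; under $\mathbb E_z$, $\hat Z=Z_1$, $\hat\beta=\beta(z,\hat Z,\epsilon_1)$, $\hat R=R(z,\hat Z,\epsilon_1)$, $\hat Y=Y(z,\hat Z,\epsilon_1)$. Assumption 2 holds: (a) $\mathbb E_zu'(\hat Y,\hat Z)<\infty$ and $\mathbb E_z\hat\beta\hat Ru'(\hat Y,\hat Z)<\infty$ for all $z$; (b) $r(K(1))<1$ ($r$ = spectral radius), $K_{z\hat z}(\theta)=P(z,\hat z)\int\beta(z,\hat z,\epsilon)R(z,\hat z,\epsilon)^\theta\pi(d\epsilon)$. $S_0=(0,\infty)\times\mathsf Z$; $\mathcal C$: continuous $c:S_0\to\mathbb R_+$, increasing in $w$, $0<c(w,z)\le w$, $\sup_{S_0}|u'(c(w,z),z)-u'(w,z)|<\infty$. $T$: $Tc(w,z)$ is the unique $\xi\in(0,w]$ with $u'(\xi,z)=\max\{\mathbb E_z\hat\beta\hat Ru'(c(\hat R(w-\xi)+\hat Y,\hat Z),\hat Z),u'(w,z)\}$. For each $i$, $Q_i(j,k)=\int\beta(z_{ij},z_{ik},\epsilon)R(z_{ij},z_{ik},\epsilon)^{1-\gamma_i}\pi(d\epsilon)$, $G_i:=\bar p_{ii}(\tilde P\circ Q_i)$ ($\circ$ = entrywise product), and $F_i:[1,\infty)^M\to[1,\infty)^M$, $(F_ix)(\tilde z_j)=\big(1+(G_ix)(\tilde z_j)^{1/\gamma_i}\big)^{\gamma_i}$.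 *)

theory Defs
  imports "HOL-Probability.Probability" "Jordan_Normal_Form.Spectral_Radius"
begin

text \<open>States: z_{ij} is represented by the pair (i,j) with i < N, j < M (0-based).\<close>

definition states :: "nat \<Rightarrow> nat \<Rightarrow> (nat \<times> nat) set" where
  "states N M = {(i, j). i < N \<and> j < M}"

definition stochastic :: "nat \<Rightarrow> (nat \<Rightarrow> nat \<Rightarrow> real) \<Rightarrow> bool" where
  "stochastic n P \<longleftrightarrow> (\<forall>a<n. (\<forall>b<n. P a b \<ge> 0) \<and> (\<Sum>b<n. P a b) = 1)"

definition Ptrans :: "(nat \<Rightarrow> nat \<Rightarrow> real) \<Rightarrow> (nat \<Rightarrow> nat \<Rightarrow> real) \<Rightarrow> nat \<times> nat \<Rightarrow> nat \<times> nat \<Rightarrow> real" where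
  "Ptrans Pb Pt z z' = Pb (fst z) (fst z') * Pt (snd z) (snd z')"

definition epow :: "real \<Rightarrow> real \<Rightarrow> ennreal" where
  "epow x \<theta> = (if x > 0 then ennreal (x powr \<theta>)
                else if \<theta> > 0 then 0 else if \<theta> = 0 then 1 else \<infinity>)"

definition uprime :: "(nat \<Rightarrow> real) \<Rightarrow> real \<Rightarrow> nat \<times> nat \<Rightarrow> ennreal" where
  "uprime \<gamma> c z = epow c (- \<gamma> (fst z))"

text \<open>Conditional expectation E_z of f(Zhat, eps_1) given Z_0 = z.\<close>
definition Ez :: "nat \<Rightarrow> nat \<Rightarrow> (nat \<Rightarrow> nat \<Rightarrow> real) \<Rightarrow> (nat \<Rightarrow> nat \<Rightarrow> real)
    \<Rightarrow> 'e measure \<Rightarrow> nat \<times> nat \<Rightarrow> (nat \<times> nat \<Rightarrow> 'e \<Rightarrow> ennreal) \<Rightarrow> ennreal" where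
  "Ez N M Pb Pt \<pi> z f = (\<Sum>z'\<in>states N M. ennreal (Ptrans Pb Pt z z') * (\<integral>\<^sup>+ e. f z' e \<partial>\<pi>))"

definition Kmat :: "nat \<Rightarrow> nat \<Rightarrow> (nat \<Rightarrow> nat \<Rightarrow> real) \<Rightarrow> (nat \<Rightarrow> nat \<Rightarrow> real) \<Rightarrow> 'e measure
    \<Rightarrow> (nat \<times> nat \<Rightarrow> nat \<times> nat \<Rightarrow> 'e \<Rightarrow> real) \<Rightarrow> (nat \<times> nat \<Rightarrow> nat \<times> nat \<Rightarrow> 'e \<Rightarrow> real)
    \<Rightarrow> real \<Rightarrow> nat \<times> nat \<Rightarrow> nat \<times> nat \<Rightarrow> ennreal" where
  "Kmat N M Pb Pt \<pi> \<beta> R \<theta> z z' =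
     ennreal (Ptrans Pb Pt z z') * (\<integral>\<^sup>+ e. ennreal (\<beta> z z' e) * epow (R z z' e) \<theta> \<partial>\<pi>)"

definition rho :: "nat \<Rightarrow> (nat \<Rightarrow> nat \<Rightarrow> real) \<Rightarrow> real" where
  "rho n A = spectral_radius (mat n n (\<lambda>(a, b). complex_of_real (A a b)))"

definition idx_state :: "nat \<Rightarrow> nat \<Rightarrow> nat \<times> nat" where
  "idx_state M a = (a div M, a mod M)"

definition specrad_lt1_states :: "nat \<Rightarrow> nat \<Rightarrow> (nat \<times> nat \<Rightarrow> nat \<times> nat \<Rightarrow> ennreal) \<Rightarrow> bool" where
  "specrad_lt1_states N M K \<longleftrightarrow>
     (\<forall>z\<in>states N M. \<forall>z'\<in>states N M. K z z' < \<infinity>) \<and>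
     rho (N * M) (\<lambda>a b. enn2real (K (idx_state M a) (idx_state M b))) < 1"

definition Qmat :: "(nat \<Rightarrow> real) \<Rightarrow> 'e measure \<Rightarrow> (nat \<times> nat \<Rightarrow> nat \<times> nat \<Rightarrow> 'e \<Rightarrow> real)
    \<Rightarrow> (nat \<times> nat \<Rightarrow> nat \<times> nat \<Rightarrow> 'e \<Rightarrow> real) \<Rightarrow> nat \<Rightarrow> nat \<Rightarrow> nat \<Rightarrow> ennreal" where
  "Qmat \<gamma> \<pi> \<beta> R i j k =
     (\<integral>\<^sup>+ e. ennreal (\<beta> (i, j) (i, k) e) * epow (R (i, j) (i, k) e) (1 - \<gamma> i) \<partial>\<pi>)"

definition Gmat :: "(nat \<Rightarrow> real) \<Rightarrow> (nat \<Rightarrow> nat \<Rightarrow> real) \<Rightarrow> (nat \<Rightarrow> nat \<Rightarrow> real) \<Rightarrow> 'e measure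
    \<Rightarrow> (nat \<times> nat \<Rightarrow> nat \<times> nat \<Rightarrow> 'e \<Rightarrow> real) \<Rightarrow> (nat \<times> nat \<Rightarrow> nat \<times> nat \<Rightarrow> 'e \<Rightarrow> real)
    \<Rightarrow> nat \<Rightarrow> nat \<Rightarrow> nat \<Rightarrow> ennreal" where
  "Gmat \<gamma> Pb Pt \<pi> \<beta> R i j k = ennreal (Pb i i * Pt j k) * Qmat \<gamma> \<pi> \<beta> R i j k"

definition specrad_lt1 :: "nat \<Rightarrow> (nat \<Rightarrow> nat \<Rightarrow> ennreal) \<Rightarrow> bool" where
  "specrad_lt1 M G \<longleftrightarrow> (\<forall>j<M. \<forall>k<M. G j k < \<infinity>) \<and> rho M (\<lambda>j k. enn2real (G j k)) < 1"

definition Fmap :: "nat \<Rightarrow> real \<Rightarrow> (nat \<Rightarrow> nat \<Rightarrow> ennreal) \<Rightarrow> (nat \<Rightarrow> real) \<Rightarrow> nat \<Rightarrow> real" where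
  "Fmap M g G x j = (1 + (\<Sum>k<M. enn2real (G j k) * x k) powr (1 / g)) powr g"

definition policy_class :: "nat \<Rightarrow> nat \<Rightarrow> (nat \<Rightarrow> real) \<Rightarrow> (real \<Rightarrow> nat \<times> nat \<Rightarrow> real) \<Rightarrow> bool" where
  "policy_class N M \<gamma> c \<longleftrightarrow>
     (\<forall>z\<in>states N M. continuous_on {0<..} (\<lambda>w. c w z) \<and> mono_on {0<..} (\<lambda>w. c w z)) \<and>
     (\<forall>z\<in>states N M. \<forall>w>0. 0 < c w z \<and> c w z \<le> w) \<and>
     (\<exists>B. \<forall>z\<in>states N M. \<forall>w>0.
        \<bar>c w z powr (- \<gamma> (fst z)) - w powr (- \<gamma> (fst z))\<bar> \<le> B)"

definition Top :: "nat \<Rightarrow> nat \<Rightarrow> (nat \<Rightarrow> real) \<Rightarrow> (nat \<Rightarrow> nat \<Rightarrow> real) \<Rightarrow> (nat \<Rightarrow> nat \<Rightarrow> real)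
    \<Rightarrow> 'e measure \<Rightarrow> (nat \<times> nat \<Rightarrow> nat \<times> nat \<Rightarrow> 'e \<Rightarrow> real) \<Rightarrow> (nat \<times> nat \<Rightarrow> nat \<times> nat \<Rightarrow> 'e \<Rightarrow> real)
    \<Rightarrow> (nat \<times> nat \<Rightarrow> nat \<times> nat \<Rightarrow> 'e \<Rightarrow> real) \<Rightarrow> (real \<Rightarrow> nat \<times> nat \<Rightarrow> real) \<Rightarrow> real \<Rightarrow> nat \<times> nat \<Rightarrow> real" where
  "Top N M \<gamma> Pb Pt \<pi> \<beta> R Y c w z =
     (THE \<xi>. 0 < \<xi> \<and> \<xi> \<le> w \<and>
        uprime \<gamma> \<xi> z =
          max (Ez N M Pb Pt \<pi> z (\<lambda>z' e. ennreal (\<beta> z z' e) * ennreal (R z z' e) *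
                    uprime \<gamma> (c (R z z' e * (w - \<xi>) + Y z z' e) z') z'))
              (uprime \<gamma> w z))"

end

theory Submission
  imports Defs
begin


lemma epow_meas[measurable]:
  assumes [measurable]: "f \<in> borel_measurable M"
  shows "(\<lambda>e. epow (f e) \<theta>) \<in> borel_measurable M"
  unfolding epow_def by measurable

lemma comp_meas:
  fixes cf :: "real \<Rightarrow> real"
  assumes "continuous_on {0<..} cf" "f \<in> borel_measurable M" "\<And>e. e \<in> space M \<Longrightarrow> f e \<ge> 0"
  shows "(\<lambda>e. cf (f e)) \<in> borel_measurable M"
proof -
  let ?g = "\<lambda>t. if t \<in> {0<..} then cf t else cf 0"
  have "?g \<in> borel_measurable borel"
    by (rule borel_measurable_continuous_on_if) (auto intro: assms continuous_on_const)
  then have "(\<lambda>e. ?g (f e)) \<in> borel_measurable M"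
    using assms(2) by (rule measurable_compose[rotated])
  then show ?thesis
    by (rule measurable_cong[THEN iffD1, rotated]) (use assms(3) in force)
qed

lemma pw_bound:
  fixes cf :: "real \<Rightarrow> real"
  assumes g: "g > 0" and r: "r \<ge> 0" and y: "y \<ge> 0" and xi: "\<xi> \<le> w" and B: "B \<ge> 0"
    and pos: "\<And>t. t > 0 \<Longrightarrow> cf t > 0" and bnd: "\<And>t. t > 0 \<Longrightarrow> cf t powr (-g) \<le> t powr (-g) + B"
  shows "epow (cf (r * (w - \<xi>) + y)) (-g) \<le> epow y (-g) + ennreal B"
proof (cases "y > 0")
  case True
  let ?a = "r*(w-\<xi>)+y"
  have a: "?a \<ge> y" using r xi by simp
  have apos: "?a > 0" using a True by linarith
  have "cf ?a powr (-g) \<le> ?a powr (-g) + B" using bnd apos .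
  also have "?a powr (-g) \<le> y powr (-g)" by (rule powr_mono2') (use g True a in auto)
  finally have "cf ?a powr -g \<le> y powr -g + B" by simp
  hence "ennreal (cf ?a powr -g) \<le> ennreal (y powr -g + B)" by (rule ennreal_leI)
  also have "\<dots> = ennreal (y powr -g) + ennreal B" using B by (simp add: ennreal_plus)
  finally show ?thesis using True pos[OF apos] by (simp add: epow_def)
next
  case False
  then have "y = 0" using y by simp
  then show ?thesis using g by (simp add: epow_def)
qed

lemma pt_lim:
  fixes cf :: "real \<Rightarrow> real" and s :: "nat \<Rightarrow> real"
  assumes b: "b > 0" and r: "r > 0" and y: "y > 0" and g: "g > 0"
    and cont: "continuous_on {0<..} cf" and pos: "\<And>t. t>0 \<Longrightarrow> cf t > 0"
    and s: "\<And>n. s n \<le> w" and x0: "x0 \<le> w" and lim: "s \<longlonglongrightarrow> x0"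
  shows "(\<lambda>n. ennreal b * ennreal r * epow (cf (r*(w - s n)+y)) (-g)) \<longlonglongrightarrow>
          ennreal b * ennreal r * epow (cf (r*(w-x0)+y)) (-g)"
proof -
  have eq: "ennreal b * ennreal r * epow (cf (r*(w-\<xi>)+y)) (-g) = ennreal (b*r*cf (r*(w-\<xi>)+y) powr -g)"
    if "\<xi> \<le> w" for \<xi>
  proof -
    have "r*(w-\<xi>) \<ge> 0" using that r by simp
    then have "r*(w-\<xi>)+y > 0" using y by linarith
    then have "cf (r*(w-\<xi>)+y) > 0" by (rule pos)
    then show ?thesis using b r by (simp add: epow_def ennreal_mult)
  qed
  have apos: "r*(w-x0)+y > 0" using x0 r y by (smt (verit) mult_nonneg_nonneg)
  have ic: "isCont cf (r*(w-x0)+y)"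
    using cont apos continuous_on_eq_continuous_at[of "{0<..}" cf] by auto
  have l1: "(\<lambda>n. r*(w - s n)+y) \<longlonglongrightarrow> r*(w-x0)+y" by (intro tendsto_intros lim)
  have l2: "(\<lambda>n. cf (r*(w - s n)+y)) \<longlonglongrightarrow> cf (r*(w-x0)+y)"
    by (rule isCont_tendsto_compose[OF ic l1])
  have l3: "(\<lambda>n. b*r*cf (r*(w - s n)+y) powr -g) \<longlonglongrightarrow> b*r*cf (r*(w-x0)+y) powr -g"
    by (intro tendsto_intros l2) (use pos[OF apos] in auto)
  show ?thesis
    unfolding eq[OF s] eq[OF x0] by (rule tendsto_ennrealI[OF l3])
qed



lemma int_cont:
  fixes b r y :: "'e \<Rightarrow> real" and cf :: "real \<Rightarrow> real" and s :: "nat \<Rightarrow> real"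
  assumes [measurable]: "b \<in> borel_measurable \<pi>" "r \<in> borel_measurable \<pi>" "y \<in> borel_measurable \<pi>"
    and nn: "\<And>e. b e \<ge> 0" "\<And>e. r e \<ge> 0" "\<And>e. y e \<ge> 0"
    and g: "g > 0" and B: "B \<ge> 0"
    and cont: "continuous_on {0<..} cf" and pos: "\<And>t. t>0 \<Longrightarrow> cf t > 0"
    and bnd: "\<And>t. t > 0 \<Longrightarrow> cf t powr (-g) \<le> t powr (-g) + B"
    and fin1: "(\<integral>\<^sup>+e. ennreal (b e) * ennreal (r e) * epow (y e) (-g) \<partial>\<pi>) < \<infinity>"
    and fin2: "(\<integral>\<^sup>+e. ennreal (b e) * ennreal (r e) \<partial>\<pi>) < \<infinity>"
    and s: "\<And>n. s n \<le> w" and x0: "x0 \<le> w" and lim: "s \<longlonglongrightarrow> x0"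
  shows "(\<lambda>n. \<integral>\<^sup>+e. ennreal (b e) * ennreal (r e) * epow (cf (r e * (w - s n) + y e)) (-g) \<partial>\<pi>)
           \<longlonglongrightarrow> (\<integral>\<^sup>+e. ennreal (b e) * ennreal (r e) * epow (cf (r e * (w - x0) + y e)) (-g) \<partial>\<pi>)"
proof (rule nn_integral_dominated_convergence[where w="\<lambda>e. ennreal (b e) * ennreal (r e) * (epow (y e) (-g) + ennreal B)"])
  have m: "(\<lambda>e. cf (r e * (w - \<xi>) + y e)) \<in> borel_measurable \<pi>" if "\<xi> \<le> w" for \<xi>
  proof (rule comp_meas[OF cont])
    show "(\<lambda>e. r e * (w - \<xi>) + y e) \<in> borel_measurable \<pi>" by measurable
    show "r e * (w - \<xi>) + y e \<ge> 0" for e using nn[of e] that by simp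
  qed
  show "(\<lambda>e. ennreal (b e) * ennreal (r e) * epow (cf (r e * (w - s i) + y e)) (-g)) \<in> borel_measurable \<pi>" for i
    using m[OF s[of i]] by measurable
  show "(\<lambda>e. ennreal (b e) * ennreal (r e) * epow (cf (r e * (w - x0) + y e)) (-g)) \<in> borel_measurable \<pi>"
    using m[OF x0] by measurable
  show "(\<lambda>e. ennreal (b e) * ennreal (r e) * (epow (y e) (-g) + ennreal B)) \<in> borel_measurable \<pi>"
    by measurable
  show "AE e in \<pi>. ennreal (b e) * ennreal (r e) * epow (cf (r e * (w - s j) + y e)) (-g)
          \<le> ennreal (b e) * ennreal (r e) * (epow (y e) (-g) + ennreal B)" for j
    by (intro AE_I2 mult_left_mono pw_bound[OF g nn(2) nn(3) s B pos bnd]) auto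
  have "(\<integral>\<^sup>+e. ennreal (b e) * ennreal (r e) * (epow (y e) (-g) + ennreal B) \<partial>\<pi>)
      = (\<integral>\<^sup>+e. ennreal (b e) * ennreal (r e) * epow (y e) (-g) + ennreal B * (ennreal (b e) * ennreal (r e)) \<partial>\<pi>)"
    by (simp add: distrib_left mult.commute)
  also have "\<dots> = (\<integral>\<^sup>+e. ennreal (b e) * ennreal (r e) * epow (y e) (-g) \<partial>\<pi>) + ennreal B * (\<integral>\<^sup>+e. ennreal (b e) * ennreal (r e) \<partial>\<pi>)"
    by (subst nn_integral_add) (auto simp: nn_integral_cmult)
  also have "\<dots> < \<infinity>" using fin1 fin2 by (simp add: ennreal_mult_less_top)
  finally show "(\<integral>\<^sup>+e. ennreal (b e) * ennreal (r e) * (epow (y e) (-g) + ennreal B) \<partial>\<pi>) < \<infinity>" .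
  have "AE e in \<pi>. ennreal (b e) * ennreal (r e) * epow (y e) (-g) \<noteq> \<infinity>"
    by (rule nn_integral_PInf_AE) (use fin1 in auto)
  then show "AE e in \<pi>. (\<lambda>n. ennreal (b e) * ennreal (r e) * epow (cf (r e * (w - s n) + y e)) (-g)) \<longlonglongrightarrow>
          ennreal (b e) * ennreal (r e) * epow (cf (r e * (w - x0) + y e)) (-g)"
  proof (rule AE_mp, intro AE_I2 impI)
    fix e assume fe: "ennreal (b e) * ennreal (r e) * epow (y e) (-g) \<noteq> \<infinity>"
    show "(\<lambda>n. ennreal (b e) * ennreal (r e) * epow (cf (r e * (w - s n) + y e)) (-g)) \<longlonglongrightarrow>
          ennreal (b e) * ennreal (r e) * epow (cf (r e * (w - x0) + y e)) (-g)"
    proof (cases "b e = 0 \<or> r e = 0")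
      case True then show ?thesis by auto
    next
      case False
      then have bp: "b e > 0" and rp: "r e > 0" using nn[of e] by auto
      have "y e > 0"
      proof (rule ccontr)
        assume "\<not> y e > 0"
        then have "y e = 0" using nn(3)[of e] by simp
        then show False using fe g bp rp by (simp add: epow_def ennreal_mult_eq_top_iff)
      qed
      then show ?thesis by (rule pt_lim[OF bp rp _ g cont pos s x0 lim])
    qed
  qed
qed

lemma int_W:
  fixes b r y :: "'e \<Rightarrow> real" and cf :: "real \<Rightarrow> real"
  assumes [measurable]: "b \<in> borel_measurable \<pi>" "r \<in> borel_measurable \<pi>" "y \<in> borel_measurable \<pi>"
    and nn: "\<And>e. b e \<ge> 0" "\<And>e. r e \<ge> 0" "\<And>e. y e \<ge> 0"
    and g: "g > 0" and B: "B \<ge> 0"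
    and pos: "\<And>t. t>0 \<Longrightarrow> cf t > 0"
    and bnd: "\<And>t. t > 0 \<Longrightarrow> cf t powr (-g) \<le> t powr (-g) + B"
    and fin1: "(\<integral>\<^sup>+e. ennreal (b e) * ennreal (r e) * epow (y e) (-g) \<partial>\<pi>) < \<infinity>"
    and fin2: "(\<integral>\<^sup>+e. ennreal (b e) * ennreal (r e) \<partial>\<pi>) < \<infinity>"
  shows "\<exists>C<\<infinity>. \<forall>\<xi>\<le>w. (\<integral>\<^sup>+e. ennreal (b e) * ennreal (r e) * epow (cf (r e * (w - \<xi>) + y e)) (-g) \<partial>\<pi>) \<le> C"
proof (intro exI conjI allI impI)
  have "(\<integral>\<^sup>+e. ennreal (b e) * ennreal (r e) * (epow (y e) (-g) + ennreal B) \<partial>\<pi>)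
      = (\<integral>\<^sup>+e. ennreal (b e) * ennreal (r e) * epow (y e) (-g) + ennreal B * (ennreal (b e) * ennreal (r e)) \<partial>\<pi>)"
    by (simp add: distrib_left mult.commute)
  also have "\<dots> = (\<integral>\<^sup>+e. ennreal (b e) * ennreal (r e) * epow (y e) (-g) \<partial>\<pi>) + ennreal B * (\<integral>\<^sup>+e. ennreal (b e) * ennreal (r e) \<partial>\<pi>)"
    by (subst nn_integral_add) (auto simp: nn_integral_cmult)
  also have "\<dots> < \<infinity>" using fin1 fin2 by (simp add: ennreal_mult_less_top)
  finally show "(\<integral>\<^sup>+e. ennreal (b e) * ennreal (r e) * (epow (y e) (-g) + ennreal B) \<partial>\<pi>) < \<infinity>" .
  fix \<xi> :: real assume xi: "\<xi> \<le> w"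
  show "(\<integral>\<^sup>+e. ennreal (b e) * ennreal (r e) * epow (cf (r e * (w - \<xi>) + y e)) (-g) \<partial>\<pi>)
     \<le> (\<integral>\<^sup>+e. ennreal (b e) * ennreal (r e) * (epow (y e) (-g) + ennreal B) \<partial>\<pi>)"
    by (intro nn_integral_mono mult_left_mono pw_bound[OF g nn(2) nn(3) xi B pos bnd]) auto
qed

lemma int_mono:
  fixes b r y :: "'e \<Rightarrow> real" and cf :: "real \<Rightarrow> real"
  assumes [measurable]: "b \<in> borel_measurable \<pi>" "r \<in> borel_measurable \<pi>" "y \<in> borel_measurable \<pi>"
    and nn: "\<And>e. b e \<ge> 0" "\<And>e. r e \<ge> 0" "\<And>e. y e \<ge> 0"
    and g: "g > 0"
    and mono: "mono_on {0<..} cf" and pos: "\<And>t. t>0 \<Longrightarrow> cf t > 0"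
    and fin1: "(\<integral>\<^sup>+e. ennreal (b e) * ennreal (r e) * epow (y e) (-g) \<partial>\<pi>) < \<infinity>"
    and le: "\<xi>1 \<le> \<xi>2" "\<xi>2 \<le> w"
  shows "(\<integral>\<^sup>+e. ennreal (b e) * ennreal (r e) * epow (cf (r e * (w - \<xi>1) + y e)) (-g) \<partial>\<pi>)
       \<le> (\<integral>\<^sup>+e. ennreal (b e) * ennreal (r e) * epow (cf (r e * (w - \<xi>2) + y e)) (-g) \<partial>\<pi>)"
proof (rule nn_integral_mono_AE)
  have "AE e in \<pi>. ennreal (b e) * ennreal (r e) * epow (y e) (-g) \<noteq> \<infinity>"
    by (rule nn_integral_PInf_AE) (use fin1 in auto)
  then show "AE e in \<pi>. ennreal (b e) * ennreal (r e) * epow (cf (r e * (w - \<xi>1) + y e)) (-g)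
       \<le> ennreal (b e) * ennreal (r e) * epow (cf (r e * (w - \<xi>2) + y e)) (-g)"
  proof (rule AE_mp, intro AE_I2 impI)
    fix e assume fe: "ennreal (b e) * ennreal (r e) * epow (y e) (-g) \<noteq> \<infinity>"
    show "ennreal (b e) * ennreal (r e) * epow (cf (r e * (w - \<xi>1) + y e)) (-g)
       \<le> ennreal (b e) * ennreal (r e) * epow (cf (r e * (w - \<xi>2) + y e)) (-g)"
    proof (cases "b e = 0 \<or> r e = 0")
      case True then show ?thesis by auto
    next
      case False
      then have bp: "b e > 0" and rp: "r e > 0" using nn[of e] by auto
      have yp: "y e > 0"
      proof (rule ccontr)
        assume "\<not> y e > 0"
        then have "y e = 0" using nn(3)[of e] by simp
        then show False using fe g bp rp by (simp add: epow_def ennreal_mult_eq_top_iff)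
      qed
      let ?a1 = "r e * (w - \<xi>1) + y e" and ?a2 = "r e * (w - \<xi>2) + y e"
      have a2: "?a2 > 0" using rp yp le by (smt (verit) mult_nonneg_nonneg)
      have a12: "?a2 \<le> ?a1" using rp le by (simp add: mult_left_mono)
      have c12: "cf ?a2 \<le> cf ?a1" using mono a2 a12 by (auto intro: mono_onD)
      have c2: "cf ?a2 > 0" using pos a2 by blast
      have "cf ?a1 powr -g \<le> cf ?a2 powr -g" by (rule powr_mono2') (use g c2 c12 in auto)
      then have "epow (cf ?a1) (-g) \<le> epow (cf ?a2) (-g)" using c2 c12 by (simp add: epow_def ennreal_leI)
      then show ?thesis by (intro mult_left_mono) auto
    qed
  qed
qed

lemma int_upper:
  fixes b r y :: "'e \<Rightarrow> real" and cf :: "real \<Rightarrow> real"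
  assumes [measurable]: "b \<in> borel_measurable \<pi>" "r \<in> borel_measurable \<pi>"
    and nn: "\<And>e. b e \<ge> 0" "\<And>e. r e \<ge> 0" "\<And>e. y e \<ge> 0"
    and g: "g > 0" and x: "x \<ge> 1"
    and cb: "\<And>t. t > 0 \<Longrightarrow> cf t \<ge> t * x powr (-1/g)"
    and xi: "\<xi> < w"
  shows "(\<integral>\<^sup>+e. ennreal (b e) * ennreal (r e) * epow (cf (r e * (w - \<xi>) + y e)) (-g) \<partial>\<pi>)
       \<le> ennreal (x * (w - \<xi>) powr -g) * (\<integral>\<^sup>+e. ennreal (b e) * epow (r e) (1 - g) \<partial>\<pi>)"
proof -
  have "(\<integral>\<^sup>+e. ennreal (b e) * ennreal (r e) * epow (cf (r e * (w - \<xi>) + y e)) (-g) \<partial>\<pi>)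
       \<le> (\<integral>\<^sup>+e. ennreal (x * (w - \<xi>) powr -g) * (ennreal (b e) * epow (r e) (1 - g)) \<partial>\<pi>)"
  proof (rule nn_integral_mono)
    fix e
    show "ennreal (b e) * ennreal (r e) * epow (cf (r e * (w - \<xi>) + y e)) (-g)
       \<le> ennreal (x * (w - \<xi>) powr -g) * (ennreal (b e) * epow (r e) (1 - g))"
    proof (cases "r e = 0")
      case True then show ?thesis by simp
    next
      case False
      then have rp: "r e > 0" using nn(2)[of e] by simp
      let ?a = "r e * (w - \<xi>) + y e"
      let ?d = "w - \<xi>"
      have d: "?d > 0" using xi by simp
      have rd: "r e * ?d > 0" using rp d by simp
      have aa: "?a \<ge> r e * ?d" using nn(3)[of e] by simp
      have xa: "x powr (-1/g) > 0" using x by simp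
      have ca: "cf ?a \<ge> ?a * x powr (-1/g)" using cb rd aa by (smt (verit))
      have lb: "?a * x powr (-1/g) \<ge> r e * ?d * x powr (-1/g)" using aa xa by (simp add: mult_right_mono)
      have lbp: "r e * ?d * x powr (-1/g) > 0" using rd xa by simp
      have cpos: "cf ?a > 0" using ca lb lbp by linarith
      have "cf ?a powr -g \<le> (r e * ?d * x powr (-1/g)) powr -g"
        by (rule powr_mono2') (use g lbp ca lb in auto)
      also have "\<dots> = r e powr -g * ?d powr -g * x"
      proof -
        have "(x powr (-1/g)) powr -g = x" using g x by (simp add: powr_powr)
        then show ?thesis using rp d xa by (simp add: powr_mult)
      qed
      finally have ineq: "cf ?a powr -g \<le> r e powr -g * ?d powr -g * x" .
      have rr: "r e * r e powr -g = r e powr (1 - g)"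
        using rp by (simp add: powr_diff powr_minus divide_inverse)
      have "b e * r e * cf ?a powr -g \<le> b e * r e * (r e powr -g * ?d powr -g * x)"
        using ineq nn(1)[of e] rp by (simp add: mult_left_mono)
      also have "\<dots> = x * ?d powr -g * (b e * r e powr (1 - g))"
        using rr by (simp add: algebra_simps)
      finally have real: "b e * r e * cf ?a powr -g \<le> x * ?d powr -g * (b e * r e powr (1 - g))" .
      have "ennreal (b e) * ennreal (r e) * epow (cf ?a) (-g) = ennreal (b e * r e * cf ?a powr -g)"
        using cpos nn(1)[of e] rp by (simp add: epow_def ennreal_mult)
      also have "\<dots> \<le> ennreal (x * ?d powr -g * (b e * r e powr (1 - g)))" by (rule ennreal_leI[OF real])
      also have "\<dots> = ennreal (x * ?d powr -g) * (ennreal (b e) * epow (r e) (1 - g))"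
        using rp nn(1)[of e] x by (simp add: epow_def ennreal_mult)
      finally show ?thesis .
    qed
  qed
  also have "\<dots> = ennreal (x * (w - \<xi>) powr -g) * (\<integral>\<^sup>+e. ennreal (b e) * epow (r e) (1 - g) \<partial>\<pi>)"
    by (rule nn_integral_cmult) measurable
  finally show ?thesis .
qed

lemma final_real:
  fixes g \<xi> w S :: real
  assumes g: "g > 0" and xi: "0 < \<xi>" "\<xi> < w" and S: "S \<ge> 0"
    and ineq: "\<xi> powr -g \<le> (w - \<xi>) powr -g * S"
  shows "w * ((1 + S powr (1/g)) powr g) powr (-1/g) \<le> \<xi>"
proof -
  have d: "w - \<xi> > 0" using xi by simp
  have "((w - \<xi>) / \<xi>) powr g = (w - \<xi>) powr g * \<xi> powr -g"
    using d xi by (simp add: powr_divide powr_minus_divide)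
  also have "\<dots> \<le> (w - \<xi>) powr g * ((w - \<xi>) powr -g * S)"
    using ineq by (simp add: mult_left_mono)
  also have "\<dots> = S" using d by (simp add: powr_minus)
  finally have h1: "((w - \<xi>) / \<xi>) powr g \<le> S" .
  have "(w - \<xi>) / \<xi> = (((w - \<xi>) / \<xi>) powr g) powr (1/g)"
    using g d xi by (simp add: powr_powr)
  also have "\<dots> \<le> S powr (1/g)" by (rule powr_mono2) (use g h1 in auto)
  finally have h2: "(w - \<xi>) / \<xi> \<le> S powr (1/g)" .
  then have h3: "w \<le> \<xi> * (1 + S powr (1/g))" using xi by (simp add: divide_le_eq algebra_simps)
  have p: "1 + S powr (1/g) > 0" by (smt (verit) powr_ge_zero)
  have "((1 + S powr (1/g)) powr g) powr (-1/g) = 1 / (1 + S powr (1/g))"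
    using g p by (simp add: powr_powr powr_minus_divide)
  then show ?thesis using h3 p by (simp add: divide_le_eq mult.commute)
qed

lemma Ez_row:
  assumes Pb: "stochastic N Pb" and i: "i < N" and pii: "Pb i i = 1"
  shows "Ez N M Pb Pt \<pi> (i, j) f = (\<Sum>k<M. ennreal (Pt j k) * (\<integral>\<^sup>+e. f (i, k) e \<partial>\<pi>))"
proof -
  have z: "Pb i a = 0" if "a < N" "a \<noteq> i" for a
  proof -
    have nn: "\<forall>b\<in>{..<N}. Pb i b \<ge> 0" and s1: "(\<Sum>b<N. Pb i b) = 1"
      using Pb i unfolding stochastic_def by auto
    have "(\<Sum>b<N. Pb i b) = Pb i i + (\<Sum>b\<in>{..<N}-{i}. Pb i b)"
      using i by (simp add: sum.remove)
    then have s0: "(\<Sum>b\<in>{..<N}-{i}. Pb i b) = 0" using s1 pii by simp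
    have "\<forall>b\<in>{..<N}-{i}. Pb i b = 0"
      using sum_nonneg_eq_0_iff[of "{..<N}-{i}" "Pb i"] s0 nn by auto
    then show ?thesis using that by auto
  qed
  have st: "states N M = {..<N} \<times> {..<M}" unfolding states_def by auto
  have "Ez N M Pb Pt \<pi> (i, j) f = (\<Sum>a<N. \<Sum>k<M. ennreal (Pb i a * Pt j k) * (\<integral>\<^sup>+e. f (a, k) e \<partial>\<pi>))"
    unfolding Ez_def st Ptrans_def by (simp add: sum.cartesian_product prod.case_eq_if)
  also have "\<dots> = (\<Sum>k<M. ennreal (Pb i i * Pt j k) * (\<integral>\<^sup>+e. f (i, k) e \<partial>\<pi>))
       + (\<Sum>a\<in>{..<N}-{i}. \<Sum>k<M. ennreal (Pb i a * Pt j k) * (\<integral>\<^sup>+e. f (a, k) e \<partial>\<pi>))"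
    using i by (simp add: sum.remove)
  also have "(\<Sum>a\<in>{..<N}-{i}. \<Sum>k<M. ennreal (Pb i a * Pt j k) * (\<integral>\<^sup>+e. f (a, k) e \<partial>\<pi>)) = 0"
    using z by (intro sum.neutral) auto
  finally show ?thesis using pii by simp
qed



theorem lemmaD1:
  fixes N M :: nat
    and Pb Pt :: "nat \<Rightarrow> nat \<Rightarrow> real"
    and \<pi> :: "'e measure"
    and \<beta> R Y :: "nat \<times> nat \<Rightarrow> nat \<times> nat \<Rightarrow> 'e \<Rightarrow> real"
    and \<gamma> :: "nat \<Rightarrow> real"
    and i :: nat
    and xstar :: "nat \<Rightarrow> real"
    and c :: "real \<Rightarrow> nat \<times> nat \<Rightarrow> real"
  assumes NM: "N \<ge> 1" "M \<ge> 1"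
    and Pb: "stochastic N Pb" and Pt: "stochastic M Pt"
    and prob: "prob_space \<pi>"
    and meas: "\<And>z z'. (\<lambda>e. \<beta> z z' e) \<in> borel_measurable \<pi>"
              "\<And>z z'. (\<lambda>e. R z z' e) \<in> borel_measurable \<pi>"
              "\<And>z z'. (\<lambda>e. Y z z' e) \<in> borel_measurable \<pi>"
    and nonneg: "\<And>z z' e. \<beta> z z' e \<ge> 0" "\<And>z z' e. R z z' e \<ge> 0" "\<And>z z' e. Y z z' e \<ge> 0"
    and gpos: "\<gamma> 0 > 0"
    and gmono: "\<And>a b. a < b \<Longrightarrow> b < N \<Longrightarrow> \<gamma> a < \<gamma> b"
    and A2a: "\<And>z. z \<in> states N M \<Longrightarrow>
                 Ez N M Pb Pt \<pi> z (\<lambda>z' e. uprime \<gamma> (Y z z' e) z') < \<infinity>"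
             "\<And>z. z \<in> states N M \<Longrightarrow>
                 Ez N M Pb Pt \<pi> z (\<lambda>z' e. ennreal (\<beta> z z' e) * ennreal (R z z' e) *
                                         uprime \<gamma> (Y z z' e) z') < \<infinity>"
    and A2b: "specrad_lt1_states N M (Kmat N M Pb Pt \<pi> \<beta> R 1)"
    and i: "i < N" and pii: "Pb i i = 1"
    and rG: "specrad_lt1 M (Gmat \<gamma> Pb Pt \<pi> \<beta> R i)"
    and xfix: "\<forall>j<M. xstar j \<ge> 1"
              "\<forall>j<M. Fmap M (\<gamma> i) (Gmat \<gamma> Pb Pt \<pi> \<beta> R i) xstar j = xstar j"
    and xuniq: "\<And>x. (\<forall>j<M. x j \<ge> 1) \<Longrightarrow>
                  (\<forall>j<M. Fmap M (\<gamma> i) (Gmat \<gamma> Pb Pt \<pi> \<beta> R i) x j = x j) \<Longrightarrow>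
                  (\<forall>j<M. x j = xstar j)"
    and cC: "policy_class N M \<gamma> c"
    and cbound: "\<And>w j. w > 0 \<Longrightarrow> j < M \<Longrightarrow> c w (i, j) / w \<ge> xstar j powr (- 1 / \<gamma> i)"
  shows "\<forall>w>0. \<forall>j<M. Top N M \<gamma> Pb Pt \<pi> \<beta> R Y c w (i, j) / w \<ge> xstar j powr (- 1 / \<gamma> i)"
proof (intro allI impI)
  fix w :: real and j :: nat assume w: "w > 0" and j: "j < M"
  define g where "g = \<gamma> i"
  have g: "g > 0"
  proof (cases "i = 0")
    case True then show ?thesis using gpos by (simp add: g_def)
  next
    case False then have "\<gamma> 0 < \<gamma> i" using gmono i by simp
    then show ?thesis using gpos by (simp add: g_def)
  qed
  define b where "b = (\<lambda>k. \<beta> (i,j) (i,k))"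
  define r where "r = (\<lambda>k. R (i,j) (i,k))"
  define y where "y = (\<lambda>k. Y (i,j) (i,k))"
  define cf where "cf = (\<lambda>k t. c t (i,k))"
  define I where "I = (\<lambda>k \<xi>. \<integral>\<^sup>+e. ennreal (b k e) * ennreal (r k e) * epow (cf k (r k e * (w - \<xi>) + y k e)) (-g) \<partial>\<pi>)"
  define E where "E = (\<lambda>\<xi>. \<Sum>k<M. ennreal (Pt j k) * I k \<xi>)"
  define uf where "uf = (\<lambda>\<xi>::real. ennreal (\<xi> powr -g))"
  define Q where "Q = (\<lambda>\<xi>. 0 < \<xi> \<and> \<xi> \<le> w \<and> uf \<xi> = max (E \<xi>) (uf w))"
  have Eeq: "Ez N M Pb Pt \<pi> (i,j) (\<lambda>z' e. ennreal (\<beta> (i,j) z' e) * ennreal (R (i,j) z' e) *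
                    uprime \<gamma> (c (R (i,j) z' e * (w - \<xi>) + Y (i,j) z' e) z') z') = E \<xi>" for \<xi>
    unfolding Ez_row[OF Pb i pii] E_def I_def b_def r_def y_def cf_def uprime_def g_def by simp
  have ueq: "uprime \<gamma> \<xi> (i,j) = uf \<xi>" if "\<xi> > 0" for \<xi>
    using that unfolding uprime_def epow_def uf_def g_def by simp
  have Top_eq: "Top N M \<gamma> Pb Pt \<pi> \<beta> R Y c w (i,j) = (THE \<xi>. Q \<xi>)"
    unfolding Top_def Eeq Q_def
    by (rule arg_cong[where f=The], rule ext) (use ueq w in auto)
  have ij: "(i,j) \<in> states N M" using i j by (simp add: states_def)
  have ik: "(i,k) \<in> states N M" if "k < M" for k using i that by (simp add: states_def)
  have ptnn: "Pt j k \<ge> 0" if "k < M" for k using Pt j that by (simp add: stochastic_def)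
  have [measurable]: "b k \<in> borel_measurable \<pi>" "r k \<in> borel_measurable \<pi>" "y k \<in> borel_measurable \<pi>" for k
    unfolding b_def r_def y_def using meas by auto
  have bnn: "b k e \<ge> 0" "r k e \<ge> 0" "y k e \<ge> 0" for k e
    unfolding b_def r_def y_def using nonneg by auto
  have cont: "continuous_on {0<..} (cf k)" and mono: "mono_on {0<..} (cf k)"
    and pos: "\<And>t. t > 0 \<Longrightarrow> cf k t > 0" and cle: "\<And>t. t > 0 \<Longrightarrow> cf k t \<le> t"
    if "k < M" for k
    using cC ik[OF that] unfolding policy_class_def cf_def by auto
  obtain B where B: "\<And>z t. z \<in> states N M \<Longrightarrow> t > 0 \<Longrightarrow>
        \<bar>c t z powr (- \<gamma> (fst z)) - t powr (- \<gamma> (fst z))\<bar> \<le> B"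
    using cC unfolding policy_class_def by blast
  have B0: "B \<ge> 0" using B[OF ij, of 1] by simp
  have bnd: "cf k t powr (-g) \<le> t powr (-g) + B" if "k < M" "t > 0" for k t
    using B[OF ik[OF that(1)] that(2)] unfolding cf_def g_def by simp
  have fin1: "(\<integral>\<^sup>+e. ennreal (b k e) * ennreal (r k e) * epow (y k e) (-g) \<partial>\<pi>) < \<infinity>"
    if "k < M" "Pt j k > 0" for k
  proof -
    have "(\<Sum>k<M. ennreal (Pt j k) * (\<integral>\<^sup>+e. ennreal (b k e) * ennreal (r k e) * epow (y k e) (-g) \<partial>\<pi>)) < \<infinity>"
      using A2a(2)[OF ij] unfolding Ez_row[OF Pb i pii] b_def r_def y_def uprime_def g_def by simp
    then have "ennreal (Pt j k) * (\<integral>\<^sup>+e. ennreal (b k e) * ennreal (r k e) * epow (y k e) (-g) \<partial>\<pi>) < \<infinity>"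
      using that(1) by simp
    then show ?thesis using that(2) by (auto simp: ennreal_mult_less_top)
  qed
  have fin2: "(\<integral>\<^sup>+e. ennreal (b k e) * ennreal (r k e) \<partial>\<pi>) < \<infinity>"
    if "k < M" "Pt j k > 0" for k
  proof -
    have "Kmat N M Pb Pt \<pi> \<beta> R 1 (i,j) (i,k) < \<infinity>"
      using A2b ij ik[OF that(1)] unfolding specrad_lt1_states_def by blast
    then have "ennreal (Pt j k) * (\<integral>\<^sup>+e. ennreal (b k e) * epow (r k e) 1 \<partial>\<pi>) < \<infinity>"
      unfolding Kmat_def Ptrans_def b_def r_def using pii by simp
    then have "(\<integral>\<^sup>+e. ennreal (b k e) * epow (r k e) 1 \<partial>\<pi>) < \<infinity>"
      using that(2) by (auto simp: ennreal_mult_less_top)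
    moreover have "epow (r k e) 1 = ennreal (r k e)" for e
      using bnn(2)[of k e] by (auto simp: epow_def)
    ultimately show ?thesis by simp
  qed
  have Ebound: "\<exists>C<\<infinity>. \<forall>\<xi>\<le>w. E \<xi> \<le> C"
  proof -
    have "\<forall>k\<in>{..<M}. \<exists>C<\<infinity>. \<forall>\<xi>\<le>w. ennreal (Pt j k) * I k \<xi> \<le> C"
    proof
      fix k assume k: "k \<in> {..<M}"
      show "\<exists>C<\<infinity>. \<forall>\<xi>\<le>w. ennreal (Pt j k) * I k \<xi> \<le> C"
      proof (cases "Pt j k = 0")
        case True then show ?thesis by (intro exI[of _ 0]) auto
      next
        case False
        then have pp: "Pt j k > 0" using ptnn k by force
        obtain C where C: "C < \<infinity>" "\<forall>\<xi>\<le>w. I k \<xi> \<le> C"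
          using int_W[of "b k" \<pi> "r k" "y k" g B "cf k" w] bnn g B0 pos bnd fin1 fin2 pp k
          unfolding I_def by auto
        show ?thesis
          by (intro exI[of _ "ennreal (Pt j k) * C"] conjI allI impI mult_left_mono)
             (use C in \<open>auto simp: ennreal_mult_less_top\<close>)
      qed
    qed
    then obtain Cf where Cf: "\<forall>k\<in>{..<M}. Cf k < \<infinity> \<and> (\<forall>\<xi>\<le>w. ennreal (Pt j k) * I k \<xi> \<le> Cf k)"
      by metis
    show ?thesis
      by (intro exI[of _ "\<Sum>k<M. Cf k"] conjI allI impI)
         (use Cf in \<open>auto simp: E_def intro!: sum_mono\<close>)
  qed
  then obtain EB where EB: "EB < \<infinity>" "\<And>\<xi>. \<xi> \<le> w \<Longrightarrow> E \<xi> \<le> EB" by blast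
  have Efin: "E \<xi> < \<infinity>" if "\<xi> \<le> w" for \<xi> using EB that by (meson le_less_trans)
  have Emono: "E \<xi>1 \<le> E \<xi>2" if "\<xi>1 \<le> \<xi>2" "\<xi>2 \<le> w" for \<xi>1 \<xi>2
    unfolding E_def
  proof (rule sum_mono)
    fix k assume k: "k \<in> {..<M}"
    show "ennreal (Pt j k) * I k \<xi>1 \<le> ennreal (Pt j k) * I k \<xi>2"
    proof (cases "Pt j k = 0")
      case True then show ?thesis by simp
    next
      case False
      then have pp: "Pt j k > 0" using ptnn k by force
      show ?thesis unfolding I_def
        by (intro mult_left_mono int_mono[of "b k" \<pi> "r k" "y k" g "cf k"])
           (use bnn g mono pos fin1 pp k that in auto)
    qed
  qed
  have Elim: "(\<lambda>n. E (s n)) \<longlonglongrightarrow> E x0" if "\<And>n. s n \<le> w" "x0 \<le> w" "s \<longlonglongrightarrow> x0" for s x0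
    unfolding E_def
  proof (rule tendsto_sum)
    fix k assume k: "k \<in> {..<M}"
    show "(\<lambda>n. ennreal (Pt j k) * I k (s n)) \<longlonglongrightarrow> ennreal (Pt j k) * I k x0"
    proof (cases "Pt j k = 0")
      case True then show ?thesis by simp
    next
      case False
      then have pp: "Pt j k > 0" using ptnn k by force
      show ?thesis unfolding I_def
        by (intro ennreal_tendsto_cmult int_cont[of "b k" \<pi> "r k" "y k" g B "cf k"])
           (use bnn g B0 cont pos bnd fin1 fin2 pp k that in auto)
    qed
  qed
  have ulim: "uf \<xi>2 < uf \<xi>1" if "0 < \<xi>1" "\<xi>1 < \<xi>2" for \<xi>1 \<xi>2
    unfolding uf_def using that g
    by (intro ennreal_lessI) (auto intro: powr_less_mono2_neg)
  have ex: "\<exists>\<xi>. Q \<xi>"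
  proof (cases "E w \<le> uf w")
    case True
    then show ?thesis using w by (intro exI[of _ w]) (auto simp: Q_def max_absorb2)
  next
    case False
    then have Ew: "uf w < E w" by simp
    define C where "C = enn2real EB"
    define \<xi>0 where "\<xi>0 = min (w/2) ((C + 1) powr (-1/g))"
    have C0: "C \<ge> 0" by (simp add: C_def)
    have x0p: "\<xi>0 > 0" using w C0 by (simp add: \<xi>0_def)
    have x0w: "\<xi>0 \<le> w" using w by (simp add: \<xi>0_def)
    have x0le: "\<xi>0 \<le> (C + 1) powr (-1/g)" by (simp add: \<xi>0_def)
    define h where "h = (\<lambda>\<xi>. enn2real (E \<xi>) - \<xi> powr -g)"
    have "((C + 1) powr (-1/g)) powr -g \<le> \<xi>0 powr -g"
      by (rule powr_mono2') (use g x0p x0le in auto)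
    moreover have "((C + 1) powr (-1/g)) powr -g = C + 1"
      using g C0 by (simp add: powr_powr)
    moreover have "enn2real (E \<xi>0) \<le> C"
      unfolding C_def using EB x0w by (intro enn2real_mono) auto
    ultimately have h0: "h \<xi>0 \<le> 0" unfolding h_def by simp
    have "ennreal (w powr -g) < ennreal (enn2real (E w))"
      using Ew Efin[of w] unfolding uf_def by simp
    then have hw: "h w > 0" unfolding h_def by (simp add: ennreal_less_iff)
    have hc: "continuous_on {\<xi>0..w} h"
    proof (rule continuous_on_sequentiallyI)
      fix s :: "nat \<Rightarrow> real" and a assume s: "\<forall>n. s n \<in> {\<xi>0..w}" and a: "a \<in> {\<xi>0..w}"
        and lim: "s \<longlonglongrightarrow> a"
      have "(\<lambda>n. E (s n)) \<longlonglongrightarrow> E a" by (rule Elim) (use s a lim in auto)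
      then have "(\<lambda>n. E (s n)) \<longlonglongrightarrow> ennreal (enn2real (E a))" using Efin[of a] a by simp
      then have l1: "(\<lambda>n. enn2real (E (s n))) \<longlonglongrightarrow> enn2real (E a)"
        by (rule tendsto_enn2real) simp
      have "a > 0" using a x0p by simp
      then have l2: "(\<lambda>n. s n powr -g) \<longlonglongrightarrow> a powr -g"
        by (intro tendsto_intros lim) auto
      show "(\<lambda>n. h (s n)) \<longlonglongrightarrow> h a" unfolding h_def by (intro tendsto_diff l1 l2)
    qed
    obtain x where x: "\<xi>0 \<le> x" "x \<le> w" "h x = 0"
      using IVT'[of h \<xi>0 0 w] h0 hw x0w hc by auto
    have xw: "x < w" using x hw by (cases "x = w") auto
    have xp: "x > 0" using x x0p by simp
    have "E x = ennreal (enn2real (E x))" using Efin[of x] x by simp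
    also have "\<dots> = uf x" using x unfolding h_def uf_def by simp
    finally have Ex: "E x = uf x" .
    have "uf w < uf x" by (rule ulim) (use xp xw in auto)
    then show ?thesis using xp x Ex by (intro exI[of _ x]) (auto simp: Q_def max_def)
  qed
  have uniq: "\<xi>1 = \<xi>2" if q1: "Q \<xi>1" and q2: "Q \<xi>2" for \<xi>1 \<xi>2
  proof -
    have less: False if q1: "Q \<xi>1" and q2: "Q \<xi>2" and lt: "\<xi>1 < \<xi>2" for \<xi>1 \<xi>2
    proof -
      have p1: "0 < \<xi>1" "\<xi>1 \<le> w" and e1: "uf \<xi>1 = max (E \<xi>1) (uf w)" using q1 by (auto simp: Q_def)
      have p2: "\<xi>2 \<le> w" and e2: "uf \<xi>2 = max (E \<xi>2) (uf w)" using q2 by (auto simp: Q_def)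
      have u12: "uf \<xi>2 < uf \<xi>1" by (rule ulim) (use p1 lt in auto)
      have "uf w \<le> uf \<xi>2" using e2 by simp
      then have "E \<xi>1 = uf \<xi>1" using e1 u12 by (auto simp: max_def split: if_splits)
      moreover have "E \<xi>1 \<le> E \<xi>2" by (rule Emono) (use lt p2 in auto)
      moreover have "E \<xi>2 \<le> uf \<xi>2" using e2 by simp
      ultimately show False using u12 by simp
    qed
    show ?thesis using less[OF q1 q2] less[OF q2 q1] by (cases \<xi>1 \<xi>2 rule: linorder_cases) auto
  qed
  have key: "w * xstar j powr (-1/g) \<le> \<xi>" if q: "Q \<xi>" for \<xi>
  proof (rule ccontr)
    assume "\<not> w * xstar j powr (-1/g) \<le> \<xi>"
    then have lt: "\<xi> < w * xstar j powr (-1/g)" by simp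
    have xj: "xstar j \<ge> 1" using xfix(1) j by simp
    have "xstar j powr (-1/g) \<le> xstar j powr 0" by (rule powr_mono) (use g xj in auto)
    then have "xstar j powr (-1/g) \<le> 1" using xj by simp
    then have "w * xstar j powr (-1/g) \<le> w * 1" using w by (intro mult_left_mono) auto
    then have "\<xi> < w" using lt by simp
    have p: "0 < \<xi>" and e: "uf \<xi> = max (E \<xi>) (uf w)" using q by (auto simp: Q_def)
    have "uf w < uf \<xi>" by (rule ulim) (use p \<open>\<xi> < w\<close> in auto)
    then have Eu: "E \<xi> = uf \<xi>" using e by (auto simp: max_def split: if_splits)
    define D where "D = (w - \<xi>) powr -g"
    define G where "G = Gmat \<gamma> Pb Pt \<pi> \<beta> R i"
    define S where "S = (\<Sum>k<M. enn2real (G j k) * xstar k)"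
    have Gfin: "G j k < \<infinity>" if "k < M" for k using rG j that unfolding specrad_lt1_def G_def by auto
    have xk: "xstar k \<ge> 1" if "k < M" for k using xfix(1) that by simp
    have "E \<xi> \<le> (\<Sum>k<M. ennreal (Pt j k) * (ennreal (xstar k * D) *
              (\<integral>\<^sup>+e. ennreal (b k e) * epow (r k e) (1 - g) \<partial>\<pi>)))"
      unfolding E_def
    proof (intro sum_mono mult_left_mono)
      fix k assume k: "k \<in> {..<M}"
      have cb: "cf k t \<ge> t * xstar k powr (-1/g)" if "t > 0" for t
      proof -
        have "xstar k powr (- 1 / \<gamma> i) \<le> c t (i, k) / t" using cbound[OF that] k by simp
        then show ?thesis using that unfolding cf_def g_def by (simp add: le_divide_eq mult.commute)
      qed
      show "I k \<xi> \<le> ennreal (xstar k * D) * (\<integral>\<^sup>+e. ennreal (b k e) * epow (r k e) (1 - g) \<partial>\<pi>)"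
        unfolding I_def D_def
        by (rule int_upper[of "b k" \<pi> "r k" "y k" g "xstar k" "cf k" \<xi> w])
           (use bnn g xk k cb \<open>\<xi> < w\<close> in auto)
    qed simp
    also have "\<dots> = (\<Sum>k<M. ennreal (xstar k * D * enn2real (G j k)))"
    proof (rule sum.cong[OF refl])
      fix k assume k: "k \<in> {..<M}"
      have "G j k = ennreal (Pt j k) * (\<integral>\<^sup>+e. ennreal (b k e) * epow (r k e) (1 - g) \<partial>\<pi>)"
        unfolding G_def Gmat_def Qmat_def b_def r_def g_def using pii by simp
      then have "ennreal (Pt j k) * (ennreal (xstar k * D) * (\<integral>\<^sup>+e. ennreal (b k e) * epow (r k e) (1 - g) \<partial>\<pi>))
          = ennreal (xstar k * D) * G j k" by (simp add: ac_simps)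
      also have "\<dots> = ennreal (xstar k * D) * ennreal (enn2real (G j k))" using Gfin k by simp
      also have "\<dots> = ennreal (xstar k * D * enn2real (G j k))"
      proof (rule ennreal_mult[symmetric])
        have "xstar k \<ge> 1" using xk k by simp
        then show "0 \<le> xstar k * D" unfolding D_def by simp
      qed simp
      finally show "ennreal (Pt j k) * (ennreal (xstar k * D) * (\<integral>\<^sup>+e. ennreal (b k e) * epow (r k e) (1 - g) \<partial>\<pi>))
          = ennreal (xstar k * D * enn2real (G j k))" .
    qed
    also have "\<dots> = ennreal (\<Sum>k<M. xstar k * D * enn2real (G j k))"
    proof (rule sum_ennreal)
      fix k assume "k \<in> {..<M}"
      then have "xstar k \<ge> 1" using xk by simp
      then show "0 \<le> xstar k * D * enn2real (G j k)" unfolding D_def by simp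
    qed
    also have "(\<Sum>k<M. xstar k * D * enn2real (G j k)) = D * S"
      unfolding S_def by (simp add: sum_distrib_left ac_simps)
    finally have "ennreal (\<xi> powr -g) \<le> ennreal (D * S)" using Eu unfolding uf_def by simp
    moreover have S0: "S \<ge> 0" unfolding S_def
    proof (rule sum_nonneg)
      fix k assume "k \<in> {..<M}"
      then have "xstar k \<ge> 1" using xk by simp
      then show "0 \<le> enn2real (G j k) * xstar k" by simp
    qed
    ultimately have ineq: "\<xi> powr -g \<le> (w - \<xi>) powr -g * S" by (simp add: D_def)
    have "xstar j = (1 + S powr (1/g)) powr g"
      using xfix(2) j unfolding Fmap_def S_def G_def g_def by simp
    then have "w * xstar j powr (-1/g) \<le> \<xi>"
      using final_real[OF g p \<open>\<xi> < w\<close> S0 ineq] by simp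
    then show False using lt by simp
  qed
  have "Q (THE \<xi>. Q \<xi>)" by (rule theI') (use ex uniq in blast)
  then have "w * xstar j powr (-1/g) \<le> Top N M \<gamma> Pb Pt \<pi> \<beta> R Y c w (i,j)"
    unfolding Top_eq by (rule key)
  then show "xstar j powr (- 1 / \<gamma> i) \<le> Top N M \<gamma> Pb Pt \<pi> \<beta> R Y c w (i, j) / w"
    using w unfolding g_def by (simp add: le_divide_eq mult.commute)
qed

end
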